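(* Let $(X,\mathcal T,P,\leq,\{\sigma_x:x\in X\})$ be a typed topological space with $X$ finite, and let $p\in P$. A set $D\subseteq X$ is $p$-closure connected if and only if for any two points $z,w\in D$ there exists a sequence $z=w_1,w_2,\dots,w_t=w$ with each $w_i\in D$ and $p\vdash tr(\{w_i\})\cap p\vdash tr(\{w_{i+1}\})\neq\emptyset$ for all $i=1,\dots,t-1$.
   Context: A typed topological space $(X,\mathcal T,P,\leq,\{\sigma_x:x\in X\})$ consists of a topological space $(X,\mathcal T)$, a partially ordered set $(P,\leq)$ of types, and for each $x\in X$ a partial function $\sigma_x:\{O\in\mathcal T:x\in O\}\to P$ such that for all $U,V$ in its domain, $\sigma_x(U)\leq\sigma_x(V)$ iff $U\subseteq V$. $U$ is a type-$p$ neighborhood of $x$ if $U$ is in the domain of $\sigma_x$ and $\sigma_x(U)=p$. $x$ is a $p$-accumulation point of $A$ if every type-$p$ neighborhood of $x$ meets $A$. $p\vdash CL_1(A)=A\cup\{p\text{-accumulation points of }A\}$, $p\vdash CL_n(A)=p\vdash CL_1(p\vdash CL_{n-1}(A))$, $p\vdash tr(A)=\bigcup_{n\ge1}p\vdash CL_n(A)$. Two sets $D,D'\subseteq X$ are $p$-closure disjoint if $p\vdash tr(D)\cap p\vdash tr(D')=\emptyset$. A set $D\subseteq X$ is $p$-closure connected if it cannot be partitioned into two non-empty subsets $E,E'$ that are $p$-closure disjoint. *)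

theory Defs
  imports "HOL-Analysis.Analysis"
begin

text \<open>A typed topological space: a topology T on X = topspace T, a partially ordered
type of types 'p, and for each x a partial function sigma x from the open
neighbourhoods of x to 'p (None = undefined) which is an order embedding
on its domain.\<close>

definition typed_top_space :: "'a topology \<Rightarrow> ('a \<Rightarrow> 'a set \<Rightarrow> 'p::order option) \<Rightarrow> bool" where
  "typed_top_space T \<sigma> \<longleftrightarrow>
     (\<forall>x \<in> topspace T. \<forall>U. \<sigma> x U \<noteq> None \<longrightarrow> openin T U \<and> x \<in> U) \<and>
     (\<forall>x \<in> topspace T. \<forall>U V. \<sigma> x U \<noteq> None \<longrightarrow> \<sigma> x V \<noteq> None \<longrightarrow>
        (the (\<sigma> x U) \<le> the (\<sigma> x V) \<longleftrightarrow> U \<subseteq> V))"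

definition type_nbhd :: "('a \<Rightarrow> 'a set \<Rightarrow> 'p option) \<Rightarrow> 'p \<Rightarrow> 'a \<Rightarrow> 'a set \<Rightarrow> bool" where
  "type_nbhd \<sigma> p x U \<longleftrightarrow> \<sigma> x U = Some p"

definition p_acc_point :: "'a topology \<Rightarrow> ('a \<Rightarrow> 'a set \<Rightarrow> 'p option) \<Rightarrow> 'p \<Rightarrow> 'a set \<Rightarrow> 'a \<Rightarrow> bool" where
  "p_acc_point T \<sigma> p A x \<longleftrightarrow> x \<in> topspace T \<and> (\<forall>U. type_nbhd \<sigma> p x U \<longrightarrow> U \<inter> A \<noteq> {})"

definition pCL1 :: "'a topology \<Rightarrow> ('a \<Rightarrow> 'a set \<Rightarrow> 'p option) \<Rightarrow> 'p \<Rightarrow> 'a set \<Rightarrow> 'a set" where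
  "pCL1 T \<sigma> p A = A \<union> {x. p_acc_point T \<sigma> p A x}"

fun pCL :: "'a topology \<Rightarrow> ('a \<Rightarrow> 'a set \<Rightarrow> 'p option) \<Rightarrow> 'p \<Rightarrow> nat \<Rightarrow> 'a set \<Rightarrow> 'a set" where
  "pCL T \<sigma> p 0 A = A"
| "pCL T \<sigma> p (Suc n) A = pCL1 T \<sigma> p (pCL T \<sigma> p n A)"

definition ptr :: "'a topology \<Rightarrow> ('a \<Rightarrow> 'a set \<Rightarrow> 'p option) \<Rightarrow> 'p \<Rightarrow> 'a set \<Rightarrow> 'a set" where
  "ptr T \<sigma> p A = (\<Union>n\<in>{1..}. pCL T \<sigma> p n A)"

definition p_closure_disjoint :: "'a topology \<Rightarrow> ('a \<Rightarrow> 'a set \<Rightarrow> 'p option) \<Rightarrow> 'p \<Rightarrow> 'a set \<Rightarrow> 'a set \<Rightarrow> bool" where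
  "p_closure_disjoint T \<sigma> p D D' \<longleftrightarrow> ptr T \<sigma> p D \<inter> ptr T \<sigma> p D' = {}"

definition p_closure_connected :: "'a topology \<Rightarrow> ('a \<Rightarrow> 'a set \<Rightarrow> 'p option) \<Rightarrow> 'p \<Rightarrow> 'a set \<Rightarrow> bool" where
  "p_closure_connected T \<sigma> p D \<longleftrightarrow>
     \<not> (\<exists>E E'. E \<noteq> {} \<and> E' \<noteq> {} \<and> E \<union> E' = D \<and> E \<inter> E' = {} \<and> p_closure_disjoint T \<sigma> p E E')"

end

theory Submission
  imports Defs
begin

lemma nbhd_unique:
  assumes "typed_top_space T \<sigma>" "x \<in> topspace T" "\<sigma> x U = Some p" "\<sigma> x V = Some p"
  shows "U = V"
proof -
  have H: "\<forall>U V. \<sigma> x U \<noteq> None \<longrightarrow> \<sigma> x V \<noteq> None \<longrightarrow> (the (\<sigma> x U) \<le> the (\<sigma> x V) \<longleftrightarrow> U \<subseteq> V)"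
    using assms(1,2) unfolding typed_top_space_def by blast
  have "U \<subseteq> V" using H[rule_format, of U V] assms(3,4) by simp
  moreover have "V \<subseteq> U" using H[rule_format, of V U] assms(3,4) by simp
  ultimately show ?thesis by blast
qed

lemma pCL1_mono: "A \<subseteq> B \<Longrightarrow> pCL1 T \<sigma> p A \<subseteq> pCL1 T \<sigma> p B"
  unfolding pCL1_def p_acc_point_def by blast

lemma pCL_mono: "A \<subseteq> B \<Longrightarrow> pCL T \<sigma> p n A \<subseteq> pCL T \<sigma> p n B"
proof (induction n)
  case 0 then show ?case by simp
next
  case (Suc n)
  then have "pCL T \<sigma> p n A \<subseteq> pCL T \<sigma> p n B" by blast
  then show ?case unfolding pCL.simps by (rule pCL1_mono)
qed

lemma ptr_mono: "A \<subseteq> B \<Longrightarrow> ptr T \<sigma> p A \<subseteq> ptr T \<sigma> p B"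
  unfolding ptr_def by (intro UN_mono order_refl pCL_mono)

lemma ptr_sub: "A \<subseteq> ptr T \<sigma> p A"
proof -
  have "A \<subseteq> pCL T \<sigma> p 1 A" by (simp add: pCL1_def)
  also have "\<dots> \<subseteq> ptr T \<sigma> p A" unfolding ptr_def by (rule UN_upper) simp
  finally show ?thesis .
qed

lemma pCL1_Un:
  assumes "typed_top_space T \<sigma>"
  shows "pCL1 T \<sigma> p (A \<union> B) = pCL1 T \<sigma> p A \<union> pCL1 T \<sigma> p B"
proof
  show "pCL1 T \<sigma> p A \<union> pCL1 T \<sigma> p B \<subseteq> pCL1 T \<sigma> p (A \<union> B)"
    using pCL1_mono by (metis Un_least sup.cobounded1 sup.cobounded2)
  show "pCL1 T \<sigma> p (A \<union> B) \<subseteq> pCL1 T \<sigma> p A \<union> pCL1 T \<sigma> p B"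
  proof
    fix x assume x: "x \<in> pCL1 T \<sigma> p (A \<union> B)"
    show "x \<in> pCL1 T \<sigma> p A \<union> pCL1 T \<sigma> p B"
    proof (rule ccontr)
      assume n: "x \<notin> pCL1 T \<sigma> p A \<union> pCL1 T \<sigma> p B"
      then have acc: "p_acc_point T \<sigma> p (A \<union> B) x" and nA: "x \<notin> A \<union> B" using x unfolding pCL1_def by auto
      then have xt: "x \<in> topspace T" unfolding p_acc_point_def by auto
      from n xt obtain U where U: "\<sigma> x U = Some p" "U \<inter> A = {}"
        unfolding pCL1_def p_acc_point_def type_nbhd_def by auto
      from n xt obtain V where V: "\<sigma> x V = Some p" "V \<inter> B = {}"
        unfolding pCL1_def p_acc_point_def type_nbhd_def by auto
      have "U = V" using nbhd_unique[OF assms xt U(1) V(1)] .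
      then show False using acc U V unfolding p_acc_point_def type_nbhd_def by auto
    qed
  qed
qed

lemma pCL_Un:
  assumes "typed_top_space T \<sigma>"
  shows "pCL T \<sigma> p n (A \<union> B) = pCL T \<sigma> p n A \<union> pCL T \<sigma> p n B"
  by (induction n) (auto simp: pCL1_Un[OF assms])

lemma ptr_Un:
  assumes "typed_top_space T \<sigma>"
  shows "ptr T \<sigma> p (A \<union> B) = ptr T \<sigma> p A \<union> ptr T \<sigma> p B"
  unfolding ptr_def using pCL_Un[OF assms] by auto

lemma ptr_fin:
  assumes "typed_top_space T \<sigma>" "finite E" "E \<noteq> {}"
  shows "ptr T \<sigma> p E = (\<Union>e\<in>E. ptr T \<sigma> p {e})"
  using assms(2,3)
proof (induction E rule: finite_ne_induct)
  case (singleton x) then show ?case by simp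
next
  case (insert x F)
  have "ptr T \<sigma> p (insert x F) = ptr T \<sigma> p ({x} \<union> F)" by simp
  also have "\<dots> = ptr T \<sigma> p {x} \<union> ptr T \<sigma> p F" using ptr_Un[OF assms(1)] by blast
  finally show ?case using insert by simp
qed

lemma find_cross:
  "ws \<noteq> [] \<Longrightarrow> hd ws \<in> E \<Longrightarrow> last ws \<notin> E \<Longrightarrow>
   \<exists>i. Suc i < length ws \<and> ws ! i \<in> E \<and> ws ! Suc i \<notin> E"
proof (induction ws)
  case Nil then show ?case by simp
next
  case (Cons a rest)
  have r: "rest \<noteq> []" using Cons.prems by auto
  have a: "a \<in> E" using Cons.prems by simp
  have l: "last rest \<notin> E" using Cons.prems r by simp
  show ?case
  proof (cases "hd rest \<in> E")
    case False
    have "(a # rest) ! Suc 0 = hd rest" using r by (simp add: hd_conv_nth)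
    moreover have "Suc 0 < length (a # rest)" using r by simp
    ultimately show ?thesis using a False by (intro exI[of _ 0]) simp
  next
    case True
    obtain i where "Suc i < length rest" "rest ! i \<in> E" "rest ! Suc i \<notin> E"
      using Cons.IH[OF r True l] by blast
    then show ?thesis by (intro exI[of _ "Suc i"]) simp
  qed
qed

theorem lemma3p7:
  fixes T :: "'a topology" and \<sigma> :: "'a \<Rightarrow> 'a set \<Rightarrow> 'p::order option"
    and p :: 'p and D :: "'a set"
  assumes "typed_top_space T \<sigma>"
    and "finite (topspace T)"
    and "D \<subseteq> topspace T"
  shows "p_closure_connected T \<sigma> p D \<longleftrightarrow>
    (\<forall>z\<in>D. \<forall>w\<in>D. \<exists>ws. ws \<noteq> [] \<and> hd ws = z \<and> last ws = w \<and> set ws \<subseteq> D \<and>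
       (\<forall>i. Suc i < length ws \<longrightarrow>
          ptr T \<sigma> p {ws ! i} \<inter> ptr T \<sigma> p {ws ! Suc i} \<noteq> {}))"
  (is "?L \<longleftrightarrow> (\<forall>z\<in>D. \<forall>w\<in>D. \<exists>ws. ?C z w ws)")
proof
  assume L: ?L
  have fD: "finite D" using assms(2,3) finite_subset by blast
  show "\<forall>z\<in>D. \<forall>w\<in>D. \<exists>ws. ?C z w ws"
  proof (intro ballI)
    fix z w assume z: "z \<in> D" and w: "w \<in> D"
    define E where "E = {v\<in>D. \<exists>ws. ?C z v ws}"
    have zE: "z \<in> E" unfolding E_def using z by (intro CollectI conjI exI[of _ "[z]"]) auto
    have "D - E = {}"
    proof (rule ccontr)
      assume ne: "D - E \<noteq> {}"
      have Ene: "E \<noteq> {}" using zE by auto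
      have ED: "E \<subseteq> D" unfolding E_def by blast
      have u: "E \<union> (D - E) = D" "E \<inter> (D - E) = {}" using ED by blast+
      have "\<And>E E'. E \<noteq> {} \<Longrightarrow> E' \<noteq> {} \<Longrightarrow> E \<union> E' = D \<Longrightarrow> E \<inter> E' = {} \<Longrightarrow> \<not> p_closure_disjoint T \<sigma> p E E'"
        using L unfolding p_closure_connected_def by blast
      then have "\<not> p_closure_disjoint T \<sigma> p E (D - E)"
        using Ene ne u by blast
      then obtain x where x: "x \<in> ptr T \<sigma> p E" "x \<in> ptr T \<sigma> p (D - E)"
        unfolding p_closure_disjoint_def by auto
      have fE: "finite E" using finite_subset[OF ED fD] .
      obtain e where e: "e \<in> E" "x \<in> ptr T \<sigma> p {e}"
        using x(1) ptr_fin[OF assms(1) fE] zE by auto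
      obtain e' where e': "e' \<in> D - E" "x \<in> ptr T \<sigma> p {e'}"
        using x(2) ptr_fin[OF assms(1) _ ne] fD by auto
      from e(1) obtain ws where ws: "?C z e ws" "e \<in> D" unfolding E_def by blast
      have "?C z e' (ws @ [e'])"
      proof (intro conjI allI impI)
        fix i assume i: "Suc i < length (ws @ [e'])"
        show "ptr T \<sigma> p {(ws @ [e']) ! i} \<inter> ptr T \<sigma> p {(ws @ [e']) ! Suc i} \<noteq> {}"
        proof (cases "Suc i < length ws")
          case True then show ?thesis using ws by (auto simp: nth_append)
        next
          case False
          then have "Suc i = length ws" using i by auto
          then have li: "i = length ws - 1" by simp
          have "(ws @ [e']) ! i = e" "(ws @ [e']) ! Suc i = e'"
            using ws li \<open>Suc i = length ws\<close> by (auto simp: nth_append last_conv_nth)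
          then show ?thesis using e e' by auto
        qed
      qed (use ws e' in auto)
      then have "e' \<in> E" unfolding E_def using e' by blast
      then show False using e' by auto
    qed
    then have "w \<in> E" using w by blast
    then show "\<exists>ws. ?C z w ws" unfolding E_def by blast
  qed
next
  assume R: "\<forall>z\<in>D. \<forall>w\<in>D. \<exists>ws. ?C z w ws"
  show ?L unfolding p_closure_connected_def
  proof
    assume "\<exists>E E'. E \<noteq> {} \<and> E' \<noteq> {} \<and> E \<union> E' = D \<and> E \<inter> E' = {} \<and> p_closure_disjoint T \<sigma> p E E'"
    then obtain E E' where EE: "E \<noteq> {}" "E' \<noteq> {}" "E \<union> E' = D" "E \<inter> E' = {}"
      "p_closure_disjoint T \<sigma> p E E'" by blast
    obtain z w where zw: "z \<in> E" "w \<in> E'" using EE by blast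
    then obtain ws where ws: "?C z w ws" using R EE(3) by blast
    then have w1: "ws \<noteq> []" "hd ws = z" "last ws = w" "set ws \<subseteq> D" by blast+
    have "last ws \<notin> E" using w1(3) zw(2) EE(4) by blast
    then obtain i where i: "Suc i < length ws" "ws ! i \<in> E" "ws ! Suc i \<notin> E"
      using find_cross[of ws E] zw(1) w1(1,2) by blast
    have "ws ! Suc i \<in> set ws" using i(1) by (rule nth_mem)
    then have "ws ! Suc i \<in> D" using w1(4) by blast
    then have "ws ! Suc i \<in> E'" using i(3) EE(3) by blast
    then have "ptr T \<sigma> p {ws ! i} \<subseteq> ptr T \<sigma> p E" "ptr T \<sigma> p {ws ! Suc i} \<subseteq> ptr T \<sigma> p E'"
      using i(2) by (auto intro!: ptr_mono)
    moreover have "ptr T \<sigma> p {ws ! i} \<inter> ptr T \<sigma> p {ws ! Suc i} \<noteq> {}"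
      using ws i(1) by blast
    moreover have "ptr T \<sigma> p E \<inter> ptr T \<sigma> p E' = {}"
      using EE(5) unfolding p_closure_disjoint_def .
    ultimately show False by blast
  qed
qed

end
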